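(* Let $F\in\mathbb{C}[x_0,\ldots,x_n]_d$ and suppose there is a homogeneous ideal $I\subseteq\operatorname{Ann}(F)\subseteq S$ such that $S/I$ has constant Hilbert polynomial $r\in\mathbb{Z}_{>0}$ and $I_d=\overline{I}_d$. Then $\operatorname{cr}(F)\leq r$.
   Context: $S=\mathbb{C}[\alpha_0,\ldots,\alpha_n]$ acts on $S^*=\mathbb{C}[x_0,\ldots,x_n]$ by partial differentiation; $\operatorname{Ann}(F)=\{\theta\in S:\theta\lrcorner F=0\}$; $\overline{I}$ is the saturation with respect to $(\alpha_0,\ldots,\alpha_n)$. The cactus rank $\operatorname{cr}(F)$ is the least $r$ such that $[F]$ lies in the projective linear span of $\nu_d(R)$ for some zero-dimensional closed subscheme $R\subseteq\mathbb{P}(S^*_1)$ of length $r$, $\nu_d$ the $d$-th Veronese map $[L]\mapsto[L^d]$. *)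

theory Defs
  imports Complex_Main "HOL-Library.Poly_Mapping"
begin

text \<open>A monomial is an exponent vector (nat =>0 nat); a polynomial is a finitely supported map
  from monomials to coefficients.  Both S = C[alpha_0..alpha_n] and S* = C[x_0..x_n] are
  modelled as the polynomials whose monomials only involve the variables 0..n.\<close>

type_synonym mpoly = "(nat \<Rightarrow>\<^sub>0 nat) \<Rightarrow>\<^sub>0 complex"

definition mdeg :: "(nat \<Rightarrow>\<^sub>0 nat) \<Rightarrow> nat" where
  "mdeg m = (\<Sum>i\<in>Poly_Mapping.keys m. Poly_Mapping.lookup m i)"

definition in_ring :: "nat \<Rightarrow> mpoly \<Rightarrow> bool" where
  "in_ring n p \<longleftrightarrow> (\<forall>m\<in>Poly_Mapping.keys p. Poly_Mapping.keys m \<subseteq> {..n})"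

definition homog :: "nat \<Rightarrow> mpoly \<Rightarrow> bool" where
  "homog k p \<longleftrightarrow> (\<forall>m\<in>Poly_Mapping.keys p. mdeg m = k)"

definition hcomp :: "nat \<Rightarrow> mpoly \<Rightarrow> mpoly" where
  "hcomp k p = (\<Sum>m\<in>{m\<in>Poly_Mapping.keys p. mdeg m = k}. Poly_Mapping.single m (Poly_Mapping.lookup p m))"

text \<open>Action of S on S* by partial differentiation:
  alpha^a applied to x^b is  prod_i b_i!/(b_i-a_i)!  x^(b-a)  if a \<le> b pointwise, else 0.\<close>
definition mono_contract :: "(nat \<Rightarrow>\<^sub>0 nat) \<Rightarrow> (nat \<Rightarrow>\<^sub>0 nat) \<Rightarrow> mpoly" where
  "mono_contract a b =
     (if (\<forall>i. Poly_Mapping.lookup a i \<le> Poly_Mapping.lookup b i)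
      then Poly_Mapping.single (b - a)
             (\<Prod>i\<in>Poly_Mapping.keys b. of_nat (fact (Poly_Mapping.lookup b i)) / of_nat (fact (Poly_Mapping.lookup b i - Poly_Mapping.lookup a i)))
      else 0)"

definition contract :: "mpoly \<Rightarrow> mpoly \<Rightarrow> mpoly" where
  "contract \<theta> F = (\<Sum>a\<in>Poly_Mapping.keys \<theta>. \<Sum>b\<in>Poly_Mapping.keys F.
       Poly_Mapping.map (\<lambda>c. Poly_Mapping.lookup \<theta> a * Poly_Mapping.lookup F b * c) (mono_contract a b))"

definition Ann :: "nat \<Rightarrow> mpoly \<Rightarrow> mpoly set" where
  "Ann n F = {\<theta>. in_ring n \<theta> \<and> contract \<theta> F = 0}"

definition is_ideal :: "nat \<Rightarrow> mpoly set \<Rightarrow> bool" where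
  "is_ideal n I \<longleftrightarrow> I \<subseteq> {p. in_ring n p} \<and> 0 \<in> I \<and>
     (\<forall>p\<in>I. \<forall>q\<in>I. p + q \<in> I) \<and> (\<forall>p\<in>I. \<forall>q. in_ring n q \<longrightarrow> q * p \<in> I)"

definition homogeneous_ideal :: "nat \<Rightarrow> mpoly set \<Rightarrow> bool" where
  "homogeneous_ideal n I \<longleftrightarrow> is_ideal n I \<and> (\<forall>p\<in>I. \<forall>k. hcomp k p \<in> I)"

definition graded :: "nat \<Rightarrow> mpoly set \<Rightarrow> mpoly set" where
  "graded k I = {p\<in>I. homog k p}"

definition cscale :: "complex \<Rightarrow> mpoly \<Rightarrow> mpoly" where
  "cscale c p = Poly_Mapping.map (\<lambda>x. c * x) p"

definition cdim :: "mpoly set \<Rightarrow> nat" where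
  "cdim V = vector_space.dim cscale V"

definition hilbert_fun :: "nat \<Rightarrow> mpoly set \<Rightarrow> nat \<Rightarrow> nat" where
  "hilbert_fun n I k = cdim (graded k {p. in_ring n p}) - cdim (graded k I)"

definition const_hilbert_poly :: "nat \<Rightarrow> mpoly set \<Rightarrow> nat \<Rightarrow> bool" where
  "const_hilbert_poly n I r \<longleftrightarrow> (\<exists>k0. \<forall>k\<ge>k0. hilbert_fun n I k = r)"

text \<open>Saturation with respect to m = (alpha_0..alpha_n):  union over N of (I : m^N);
  m^N is generated by the monomials of degree N.\<close>
definition saturation :: "nat \<Rightarrow> mpoly set \<Rightarrow> mpoly set" where
  "saturation n I = {\<theta>. in_ring n \<theta> \<and> (\<exists>N. \<forall>a. Poly_Mapping.keys a \<subseteq> {..n} \<and> mdeg a = N \<longrightarrow>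
                         Poly_Mapping.single a 1 * \<theta> \<in> I)}"

text \<open>Zero-dimensional closed subschemes R of P^n of length r are identified with their
  saturated homogeneous ideals I_R with constant Hilbert polynomial r.  The (scheme-theoretic)
  projective linear span of nu_d(R) in P(S*_d) is the common zero set of (I_R)_d, i.e. the
  forms G of degree d with theta applied to G = 0 for all theta in (I_R)_d.\<close>
definition zero_dim_scheme_ideal :: "nat \<Rightarrow> mpoly set \<Rightarrow> nat \<Rightarrow> bool" where
  "zero_dim_scheme_ideal n J r \<longleftrightarrow>
     homogeneous_ideal n J \<and> saturation n J = J \<and> const_hilbert_poly n J r"

definition in_span_veronese :: "nat \<Rightarrow> nat \<Rightarrow> mpoly set \<Rightarrow> mpoly \<Rightarrow> bool" where
  "in_span_veronese n d J F \<longleftrightarrow> (\<forall>\<theta>\<in>graded d J. contract \<theta> F = 0)"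

definition cactus_rank :: "nat \<Rightarrow> nat \<Rightarrow> mpoly \<Rightarrow> nat" where
  "cactus_rank n d F =
     (LEAST r. \<exists>J. zero_dim_scheme_ideal n J r \<and> in_span_veronese n d J F)"

end

theory Submission
  imports Defs "HOL-Library.FuncSet"
begin

lemma lookup_single_mult:
  fixes p :: mpoly
  shows "Poly_Mapping.lookup (Poly_Mapping.single m c * p) (m + u) = c * Poly_Mapping.lookup p u"
  by (simp add: lookup_mult lookup_single when_mult)

lemma keys_single_mult:
  fixes p :: mpoly
  shows "Poly_Mapping.keys (Poly_Mapping.single m c * p) \<subseteq> (\<lambda>u. m + u) ` Poly_Mapping.keys p"
  using keys_mult[of "Poly_Mapping.single m c" p] by (auto split: if_splits)

lemma lookup_single_mult_notin:
  fixes p :: mpoly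
  assumes "\<And>u. k \<noteq> m + u"
  shows "Poly_Mapping.lookup (Poly_Mapping.single m c * p) k = 0"
  by (metis (no_types, lifting) assms image_iff in_keys_iff subsetD keys_single_mult)

lemma mdeg_sum:
  assumes "finite S" "Poly_Mapping.keys m \<subseteq> S"
  shows "mdeg m = sum (Poly_Mapping.lookup m) S"
  unfolding mdeg_def using assms by (intro sum.mono_neutral_left) (auto simp: in_keys_iff)

lemma mdeg_add: "mdeg (a + b) = mdeg a + mdeg b"
proof -
  let ?S = "Poly_Mapping.keys a \<union> Poly_Mapping.keys b"
  have "Poly_Mapping.keys (a+b) \<subseteq> ?S" by (rule keys_add)
  then have "mdeg (a+b) = sum (Poly_Mapping.lookup (a+b)) ?S" by (intro mdeg_sum) auto
  also have "\<dots> = sum (Poly_Mapping.lookup a) ?S + sum (Poly_Mapping.lookup b) ?S"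
    by (simp add: lookup_add sum.distrib)
  also have "\<dots> = mdeg a + mdeg b" by (subst (1 2) mdeg_sum[symmetric]) auto
  finally show ?thesis .
qed

lemma mdeg_zero_iff: "mdeg a = 0 \<longleftrightarrow> a = 0"
  unfolding mdeg_def by (auto simp: in_keys_iff poly_mapping_eq_iff fun_eq_iff)

lemma mdeg_0 [simp]: "mdeg 0 = 0" by (simp add: mdeg_def)

lemma lookup_hcomp:
  "Poly_Mapping.lookup (hcomp k p) u = (if mdeg u = k then Poly_Mapping.lookup p u else 0)"
proof -
  have "Poly_Mapping.lookup (hcomp k p) u =
     (\<Sum>m\<in>{m \<in> Poly_Mapping.keys p. mdeg m = k}. Poly_Mapping.lookup (Poly_Mapping.single m (Poly_Mapping.lookup p m)) u)"
    unfolding hcomp_def by (simp add: lookup_sum)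
  also have "\<dots> = (\<Sum>m\<in>{m \<in> Poly_Mapping.keys p. mdeg m = k}. if m = u then Poly_Mapping.lookup p m else 0)"
    by (intro sum.cong) (auto simp: lookup_single when_def)
  also have "\<dots> = (if mdeg u = k then Poly_Mapping.lookup p u else 0)"
    by (auto simp: in_keys_iff)
  finally show ?thesis .
qed

lemma hcomp_single_mult:
  fixes p :: mpoly
  shows "hcomp i (Poly_Mapping.single m c * p) =
    (if mdeg m \<le> i then Poly_Mapping.single m c * hcomp (i - mdeg m) p else 0)"
proof (rule poly_mapping_eqI)
  fix k
  show "Poly_Mapping.lookup (hcomp i (Poly_Mapping.single m c * p)) k =
    Poly_Mapping.lookup (if mdeg m \<le> i then Poly_Mapping.single m c * hcomp (i - mdeg m) p else 0) k"
  proof (cases "\<exists>u. k = m + u")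
    case True
    then obtain u where k: "k = m + u" by blast
    show ?thesis unfolding k lookup_hcomp
      by (auto simp: lookup_single_mult lookup_hcomp mdeg_add)
  next
    case False
    then show ?thesis unfolding lookup_hcomp
      by (auto simp: lookup_single_mult_notin)
  qed
qed

lemma hcomp_add: "hcomp k (p + q) = hcomp k p + hcomp k q"
  by (rule poly_mapping_eqI) (simp add: lookup_hcomp lookup_add)

lemma hcomp_zero [simp]: "hcomp k 0 = 0"
  by (rule poly_mapping_eqI) (simp add: lookup_hcomp)

lemma hcomp_homog:
  assumes "homog j p"
  shows "hcomp k p = (if j = k then p else 0)"
  using assms unfolding homog_def
  by (intro poly_mapping_eqI) (auto simp: lookup_hcomp in_keys_iff)

lemma homog_hcomp: "homog k (hcomp k p)"
  unfolding homog_def by (auto simp: in_keys_iff lookup_hcomp split: if_splits)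

lemma in_ring_hcomp: "in_ring n p \<Longrightarrow> in_ring n (hcomp k p)"
  unfolding in_ring_def by (auto simp: in_keys_iff lookup_hcomp split: if_splits)

lemma in_ring_add: "in_ring n p \<Longrightarrow> in_ring n q \<Longrightarrow> in_ring n (p + q)"
  unfolding in_ring_def using keys_add[of p q] by blast

lemma in_ring_0 [simp]: "in_ring n 0"
  unfolding in_ring_def by simp

lemma keys_monom_add:
  fixes a b :: "nat \<Rightarrow>\<^sub>0 nat"
  shows "Poly_Mapping.keys (a + b) = Poly_Mapping.keys a \<union> Poly_Mapping.keys b"
  by (auto simp: in_keys_iff lookup_add)

lemma in_ring_mult: "in_ring n p \<Longrightarrow> in_ring n q \<Longrightarrow> in_ring n (p * q)"
  unfolding in_ring_def using keys_mult[of p q] by (force simp: keys_monom_add)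

lemma in_ring_single: "Poly_Mapping.keys m \<subseteq> {..n} \<Longrightarrow> in_ring n (Poly_Mapping.single m c)"
  unfolding in_ring_def by auto

lemma homog_single_mult:
  fixes p :: mpoly
  assumes "homog k p"
  shows "homog (mdeg m + k) (Poly_Mapping.single m c * p)"
  using assms keys_single_mult[of m c p] unfolding homog_def by (auto simp: mdeg_add)

lemma single_scalar_mult: "Poly_Mapping.single 0 c * (p::mpoly) = Poly_Mapping.map ((*) c) p"
  by (simp add: mult_map_scale_conv_mult)

lemma single_minus_one: "Poly_Mapping.single 0 (-1) * (p::mpoly) = - p"
  by (rule poly_mapping_eqI) (metis add_0 lookup_single_mult lookup_uminus mult_minus1)

lemma poly_sum_monoms:
  "(p::mpoly) = (\<Sum>m\<in>Poly_Mapping.keys p. Poly_Mapping.single m (Poly_Mapping.lookup p m))"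
proof (rule poly_mapping_eqI)
  fix k
  have "(\<Sum>m\<in>Poly_Mapping.keys p. Poly_Mapping.lookup (Poly_Mapping.single m (Poly_Mapping.lookup p m)) k)
     = (\<Sum>m\<in>Poly_Mapping.keys p. if m = k then Poly_Mapping.lookup p m else 0)"
    by (intro sum.cong) (auto simp: lookup_single when_def)
  also have "\<dots> = Poly_Mapping.lookup p k" by (auto simp: in_keys_iff)
  finally show "Poly_Mapping.lookup p k = Poly_Mapping.lookup (\<Sum>m\<in>Poly_Mapping.keys p. Poly_Mapping.single m (Poly_Mapping.lookup p m)) k"
    by (simp add: lookup_sum)
qed

lemma ideal_criterion:
  assumes sub: "Q \<subseteq> {p. in_ring n p}" and z: "0 \<in> Q"
    and add: "\<And>p q. p \<in> Q \<Longrightarrow> q \<in> Q \<Longrightarrow> p + q \<in> Q"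
    and mon: "\<And>p m c. p \<in> Q \<Longrightarrow> Poly_Mapping.keys m \<subseteq> {..n} \<Longrightarrow> Poly_Mapping.single m c * p \<in> Q"
  shows "is_ideal n Q"
  unfolding is_ideal_def
proof (intro conjI ballI allI impI sub z add)
  fix p q assume p: "p \<in> Q" and q: "in_ring n q"
  have sumQ: "(\<Sum>m\<in>M. Poly_Mapping.single m (Poly_Mapping.lookup q m) * p) \<in> Q"
    if "finite M" "M \<subseteq> Poly_Mapping.keys q" for M
    using that
  proof (induction M rule: finite_induct)
    case empty then show ?case using z by simp
  next
    case (insert x F)
    then have "Poly_Mapping.keys x \<subseteq> {..n}" using q unfolding in_ring_def by auto
    with insert p show ?case by (simp add: add mon)
  qed
  have "q * p = (\<Sum>m\<in>Poly_Mapping.keys q. Poly_Mapping.single m (Poly_Mapping.lookup q m)) * p"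
    by (subst poly_sum_monoms[of q]) simp
  also have "\<dots> = (\<Sum>m\<in>Poly_Mapping.keys q. Poly_Mapping.single m (Poly_Mapping.lookup q m) * p)"
    by (simp add: sum_distrib_right)
  finally show "q * p \<in> Q" using sumQ[of "Poly_Mapping.keys q"] by simp
qed

abbreviation X :: "(nat \<Rightarrow>\<^sub>0 nat) \<Rightarrow> mpoly" where "X a \<equiv> Poly_Mapping.single a 1"

definition Kq :: "nat \<Rightarrow> mpoly set \<Rightarrow> nat \<Rightarrow> mpoly set" where
  "Kq n I N = {\<theta>. in_ring n \<theta> \<and> (\<forall>a. Poly_Mapping.keys a \<subseteq> {..n} \<and> mdeg a = N \<longrightarrow> X a * \<theta> \<in> I)}"

lemma saturation_Kq: "saturation n I = (\<Union>N. Kq n I N)"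
  unfolding saturation_def Kq_def by auto

lemma mdeg_single: "mdeg (Poly_Mapping.single i k) = k"
  unfolding mdeg_def by auto

lemma monom_split1:
  fixes c :: "nat \<Rightarrow>\<^sub>0 nat"
  assumes "Poly_Mapping.keys c \<subseteq> {..n}" "mdeg c \<ge> 1"
  shows "\<exists>i b. i \<le> n \<and> c = Poly_Mapping.single i 1 + b \<and> Poly_Mapping.keys b \<subseteq> {..n} \<and> mdeg b + 1 = mdeg c"
proof -
  have "c \<noteq> 0" using assms mdeg_zero_iff by force
  then obtain i where i: "i \<in> Poly_Mapping.keys c"
    by (metis all_not_in_conv keys_eq_empty)
  define b where "b = c - Poly_Mapping.single i 1"
  have "c = Poly_Mapping.single i 1 + b"
    using i by (intro poly_mapping_eqI) (auto simp: b_def lookup_add lookup_minus lookup_single when_def in_keys_iff)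
  moreover have "Poly_Mapping.keys b \<subseteq> Poly_Mapping.keys c"
    by (auto simp: b_def in_keys_iff lookup_minus)
  then have "Poly_Mapping.keys b \<subseteq> {..n}" using assms(1) by blast
  ultimately show ?thesis using assms i
    by (metis (no_types, lifting) add.commute atMost_iff mdeg_add mdeg_single subsetD)
qed

lemma monom_split:
  fixes c :: "nat \<Rightarrow>\<^sub>0 nat"
  assumes "Poly_Mapping.keys c \<subseteq> {..n}" "mdeg c \<ge> N"
  shows "\<exists>a b. c = a + b \<and> mdeg a = N \<and> Poly_Mapping.keys a \<subseteq> {..n} \<and> Poly_Mapping.keys b \<subseteq> {..n}"
  using assms
proof (induction N arbitrary: c)
  case 0 then show ?case by (intro exI[of _ 0] exI[of _ c]) auto
next
  case (Suc N)
  then obtain i b where ib: "i \<le> n" "c = Poly_Mapping.single i 1 + b" "Poly_Mapping.keys b \<subseteq> {..n}" "mdeg b + 1 = mdeg c"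
    using monom_split1[of c n] by auto
  with Suc.IH[of b] Suc.prems obtain a b' where "b = a + b'" "mdeg a = N" "Poly_Mapping.keys a \<subseteq> {..n}" "Poly_Mapping.keys b' \<subseteq> {..n}"
    by auto
  with ib show ?case
    by (intro exI[of _ "Poly_Mapping.single i 1 + a"] exI[of _ b'])
       (auto simp: mdeg_add mdeg_single keys_monom_add add.assoc)
qed

lemma X_add: "X (a + b) = X a * X b"
  by (simp add: mult_single)

context
  fixes n :: nat and I :: "mpoly set"
  assumes hI: "homogeneous_ideal n I"
begin

lemma I_ideal: "is_ideal n I" using hI unfolding homogeneous_ideal_def by auto

lemma I_mult: "p \<in> I \<Longrightarrow> in_ring n q \<Longrightarrow> q * p \<in> I"
  using I_ideal unfolding is_ideal_def by auto

lemma I_add: "p \<in> I \<Longrightarrow> q \<in> I \<Longrightarrow> p + q \<in> I"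
  using I_ideal unfolding is_ideal_def by auto

lemma I_zero: "0 \<in> I"
  using I_ideal unfolding is_ideal_def by auto

lemma I_ring: "p \<in> I \<Longrightarrow> in_ring n p"
  using I_ideal unfolding is_ideal_def by auto

lemma I_hcomp: "p \<in> I \<Longrightarrow> hcomp k p \<in> I"
  using hI unfolding homogeneous_ideal_def by auto

lemma Kq_ge:
  assumes "\<theta> \<in> Kq n I N" "Poly_Mapping.keys b \<subseteq> {..n}" "mdeg b \<ge> N"
  shows "Poly_Mapping.single b c * \<theta> \<in> I"
proof -
  obtain a b' where ab: "b = a + b'" "mdeg a = N" "Poly_Mapping.keys a \<subseteq> {..n}" "Poly_Mapping.keys b' \<subseteq> {..n}"
    using monom_split[OF assms(2,3)] by blast
  have "X a * \<theta> \<in> I" using assms(1) ab unfolding Kq_def by auto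
  then have "Poly_Mapping.single b' c * (X a * \<theta>) \<in> I"
    using I_mult in_ring_single[OF ab(4)] by blast
  moreover have "Poly_Mapping.single b c = Poly_Mapping.single b' c * X a"
    by (simp add: ab(1) mult_single add.commute)
  ultimately show ?thesis by (metis mult.assoc)
qed

lemma Kq_mono: "N \<le> M \<Longrightarrow> Kq n I N \<subseteq> Kq n I M"
  using Kq_ge unfolding Kq_def by auto

lemma Kq_ideal: "is_ideal n (Kq n I N)"
proof (rule ideal_criterion)
  show "Kq n I N \<subseteq> {p. in_ring n p}" unfolding Kq_def by auto
  show "0 \<in> Kq n I N" unfolding Kq_def by (simp add: I_zero)
  show "p + q \<in> Kq n I N" if "p \<in> Kq n I N" "q \<in> Kq n I N" for p q
    using that unfolding Kq_def by (auto simp: distrib_left in_ring_add I_add)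
  show "Poly_Mapping.single m c * p \<in> Kq n I N" if "p \<in> Kq n I N" "Poly_Mapping.keys m \<subseteq> {..n}" for p m c
  proof -
    have "X a * (Poly_Mapping.single m c * p) \<in> I" if "Poly_Mapping.keys a \<subseteq> {..n}" "mdeg a = N" for a
    proof -
      have "X a * p \<in> I" using \<open>p \<in> Kq n I N\<close> that unfolding Kq_def by auto
      then have "Poly_Mapping.single m c * (X a * p) \<in> I"
        using I_mult in_ring_single[OF \<open>Poly_Mapping.keys m \<subseteq> {..n}\<close>] by blast
      then show ?thesis by (simp add: mult.left_commute)
    qed
    then show ?thesis using that unfolding Kq_def
      by (auto intro!: in_ring_mult in_ring_single)
  qed
qed

lemma Kq_hcomp: "\<theta> \<in> Kq n I N \<Longrightarrow> hcomp k \<theta> \<in> Kq n I N"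
proof -
  assume th: "\<theta> \<in> Kq n I N"
  have "X a * hcomp k \<theta> \<in> I" if "Poly_Mapping.keys a \<subseteq> {..n}" "mdeg a = N" for a
  proof -
    have "X a * \<theta> \<in> I" using th that unfolding Kq_def by auto
    then have "hcomp (k + N) (X a * \<theta>) \<in> I" by (rule I_hcomp)
    then show ?thesis by (simp add: hcomp_single_mult that)
  qed
  then show ?thesis using th unfolding Kq_def by (auto intro: in_ring_hcomp)
qed

lemma sat_ideal: "homogeneous_ideal n (saturation n I)"
proof -
  have "is_ideal n (saturation n I)"
  proof (rule ideal_criterion)
    show "saturation n I \<subseteq> {p. in_ring n p}" unfolding saturation_def by auto
    show "0 \<in> saturation n I" unfolding saturation_Kq using Kq_ideal unfolding is_ideal_def by blast
    show "p + q \<in> saturation n I" if "p \<in> saturation n I" "q \<in> saturation n I" for p q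
    proof -
      obtain N1 where "p \<in> Kq n I N1" using \<open>p \<in> saturation n I\<close> unfolding saturation_Kq by blast
      moreover obtain N2 where "q \<in> Kq n I N2" using \<open>q \<in> saturation n I\<close> unfolding saturation_Kq by blast
      ultimately have "p \<in> Kq n I (max N1 N2)" "q \<in> Kq n I (max N1 N2)" using Kq_mono by (meson max.cobounded1 max.cobounded2 subsetD)+
      then have "p + q \<in> Kq n I (max N1 N2)" using Kq_ideal unfolding is_ideal_def by blast
      then show ?thesis unfolding saturation_Kq by auto
    qed
    show "Poly_Mapping.single m c * p \<in> saturation n I" if "p \<in> saturation n I" "Poly_Mapping.keys m \<subseteq> {..n}" for p m c
    proof -
      obtain N where "p \<in> Kq n I N" using \<open>p \<in> saturation n I\<close> unfolding saturation_Kq by blast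
      then have "Poly_Mapping.single m c * p \<in> Kq n I N" using Kq_ideal that(2) in_ring_single
        unfolding is_ideal_def by blast
      then show ?thesis unfolding saturation_Kq by auto
    qed
  qed
  moreover have "hcomp k p \<in> saturation n I" if "p \<in> saturation n I" for p k
    using that Kq_hcomp unfolding saturation_Kq by auto
  ultimately show ?thesis unfolding homogeneous_ideal_def by auto
qed

lemma I_sub_sat: "I \<subseteq> saturation n I"
proof
  fix p assume "p \<in> I"
  then have "p \<in> Kq n I 0" unfolding Kq_def by (auto simp: mdeg_zero_iff I_ring)
  then show "p \<in> saturation n I" unfolding saturation_Kq by auto
qed

end

lemma sat_sat:
  assumes hI: "homogeneous_ideal n I"
  shows "saturation n (saturation n I) = saturation n I"
proof
  let ?J = "saturation n I"
  have hJ: "homogeneous_ideal n ?J" by (rule sat_ideal[OF hI])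
  show "?J \<subseteq> saturation n ?J" by (rule I_sub_sat[OF hJ])
  have "Kq n ?J N \<subseteq> ?J" for N
  proof (induction N)
    case 0
    then show ?case unfolding Kq_def by (auto simp: mdeg_zero_iff)
  next
    case (Suc N)
    show ?case
    proof
      fix \<theta> assume th: "\<theta> \<in> Kq n ?J (Suc N)"
      have "\<forall>i\<in>{..n}. \<exists>M. X (Poly_Mapping.single i 1) * \<theta> \<in> Kq n I M"
      proof
        fix i assume i: "i \<in> {..n}"
        have "X (Poly_Mapping.single i 1) * \<theta> \<in> Kq n ?J N"
        proof -
          have "X a * (X (Poly_Mapping.single i 1) * \<theta>) \<in> ?J" if "Poly_Mapping.keys a \<subseteq> {..n}" "mdeg a = N" for a
          proof -
            have "X (a + Poly_Mapping.single i 1) * \<theta> \<in> ?J"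
              using th that i unfolding Kq_def by (auto simp: mdeg_add mdeg_single keys_monom_add)
            then show ?thesis by (simp add: X_add mult.assoc)
          qed
          then show ?thesis using th i unfolding Kq_def by (auto intro!: in_ring_mult in_ring_single)
        qed
        then have "X (Poly_Mapping.single i 1) * \<theta> \<in> ?J" using Suc.IH by blast
        then show "\<exists>M. X (Poly_Mapping.single i 1) * \<theta> \<in> Kq n I M" unfolding saturation_Kq by auto
      qed
      then obtain Mf where Mf: "\<forall>i\<in>{..n}. X (Poly_Mapping.single i 1) * \<theta> \<in> Kq n I (Mf i)"
        by metis
      define M where "M = Max (Mf ` {..n})"
      have Mi: "X (Poly_Mapping.single i 1) * \<theta> \<in> Kq n I M" if "i \<le> n" for i
        using Mf that Kq_mono[OF hI, of "Mf i" M] unfolding M_def by auto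
      have "\<theta> \<in> Kq n I (Suc M)"
        unfolding Kq_def
      proof (intro CollectI conjI allI impI)
        show "in_ring n \<theta>" using th unfolding Kq_def by auto
        fix c assume c: "Poly_Mapping.keys c \<subseteq> {..n} \<and> mdeg c = Suc M"
        then obtain i b where ib: "i \<le> n" "c = Poly_Mapping.single i 1 + b" "Poly_Mapping.keys b \<subseteq> {..n}" "mdeg b + 1 = mdeg c"
          using monom_split1[of c n] by auto
        have "X b * (X (Poly_Mapping.single i 1) * \<theta>) \<in> I"
          using Mi[OF ib(1)] ib c unfolding Kq_def by auto
        then show "X c * \<theta> \<in> I" by (simp add: ib(2) X_add ac_simps)
      qed
      then show "\<theta> \<in> ?J" unfolding saturation_Kq by auto
    qed
  qed
  then show "saturation n ?J \<subseteq> ?J" unfolding saturation_Kq[of n ?J] by auto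
qed

definition LM :: "mpoly \<Rightarrow> (nat \<Rightarrow>\<^sub>0 nat)" where "LM p = Max (Poly_Mapping.keys p)"

definition pw :: "(nat \<Rightarrow>\<^sub>0 nat) \<Rightarrow> (nat \<Rightarrow>\<^sub>0 nat) \<Rightarrow> bool" where
  "pw a b \<longleftrightarrow> (\<forall>i. Poly_Mapping.lookup a i \<le> Poly_Mapping.lookup b i)"

lemma LM_in_keys: "p \<noteq> 0 \<Longrightarrow> LM p \<in> Poly_Mapping.keys p"
  unfolding LM_def by (rule Max_in) auto

lemma LM_max: "a \<in> Poly_Mapping.keys p \<Longrightarrow> a \<le> LM p"
  unfolding LM_def by (rule Max_ge) auto

lemma keys_single_mult_eq:
  fixes p :: mpoly
  assumes "c \<noteq> 0"
  shows "Poly_Mapping.keys (Poly_Mapping.single m c * p) = (\<lambda>u. m + u) ` Poly_Mapping.keys p"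
proof
  show "Poly_Mapping.keys (Poly_Mapping.single m c * p) \<subseteq> (\<lambda>u. m + u) ` Poly_Mapping.keys p"
    by (rule keys_single_mult)
  show "(\<lambda>u. m + u) ` Poly_Mapping.keys p \<subseteq> Poly_Mapping.keys (Poly_Mapping.single m c * p)"
    using assms by (auto simp: in_keys_iff lookup_single_mult)
qed

lemma LM_single_mult:
  fixes p :: mpoly
  assumes "c \<noteq> 0" "p \<noteq> 0"
  shows "Poly_Mapping.single m c * p \<noteq> 0" "LM (Poly_Mapping.single m c * p) = m + LM p"
proof -
  have k: "Poly_Mapping.keys (Poly_Mapping.single m c * p) = (\<lambda>u. m + u) ` Poly_Mapping.keys p"
    using keys_single_mult_eq[OF assms(1)] .
  have ne: "Poly_Mapping.keys p \<noteq> {}" using assms(2) by simp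
  then show "Poly_Mapping.single m c * p \<noteq> 0"
    using k by (metis image_is_empty keys_eq_empty)
  have "mono (\<lambda>u::nat \<Rightarrow>\<^sub>0 nat. m + u)" by (intro monoI add_left_mono)
  then show "LM (Poly_Mapping.single m c * p) = m + LM p"
    unfolding LM_def k using mono_Max_commute[of "\<lambda>u. m + u" "Poly_Mapping.keys p"] ne by simp
qed

lemma nat_incseq_sub:
  fixes s :: "nat \<Rightarrow> nat"
  shows "\<exists>h. strict_mono h \<and> incseq (\<lambda>j. s (h j))"
proof -
  obtain f where f: "strict_mono f" "monoseq (\<lambda>j. s (f j))" using seq_monosub by blast
  show ?thesis
  proof (cases "incseq (\<lambda>j. s (f j))")
    case True then show ?thesis using f by blast
  next
    case False
    then have dec: "\<And>m n. m \<le> n \<Longrightarrow> s (f n) \<le> s (f m)"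
      using f(2) unfolding monoseq_def incseq_def by blast
    let ?t = "\<lambda>j. s (f j)"
    have "range ?t \<subseteq> {..s (f 0)}" using dec[of 0] by auto
    then have fin: "finite (range ?t)" using finite_subset by blast
    obtain N where N: "?t N = Min (range ?t)"
      using Min_in[OF fin] by auto
    have const: "?t n = ?t N" if "n \<ge> N" for n
    proof -
      have "?t n \<le> ?t N" by (rule dec[OF that])
      moreover have "Min (range ?t) \<le> ?t n" by (rule Min_le[OF fin]) simp
      ultimately show ?thesis using N by linarith
    qed
    have "strict_mono (\<lambda>j. f (j + N))"
      using f(1) unfolding strict_mono_def by auto
    moreover have "incseq (\<lambda>j. s (f (j + N)))"
    proof (rule monoI)
      fix x y :: nat assume "x \<le> y"
      show "s (f (x + N)) \<le> s (f (y + N))" using const[of "x+N"] const[of "y+N"] by simp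
    qed
    ultimately show ?thesis by blast
  qed
qed

lemma dickson_aux:
  fixes f :: "nat \<Rightarrow> (nat \<Rightarrow>\<^sub>0 nat)"
  shows "\<exists>h. strict_mono h \<and> (\<forall>i<m. incseq (\<lambda>j. Poly_Mapping.lookup (f (h j)) i))"
proof (induction m)
  case 0
  then show ?case by (intro exI[of _ id]) (auto simp: strict_mono_def)
next
  case (Suc m)
  then obtain h where h: "strict_mono h" "\<forall>i<m. incseq (\<lambda>j. Poly_Mapping.lookup (f (h j)) i)" by blast
  obtain h2 where h2: "strict_mono h2" "incseq (\<lambda>j. Poly_Mapping.lookup (f (h (h2 j))) m)"
    using nat_incseq_sub[of "\<lambda>j. Poly_Mapping.lookup (f (h j)) m"] by blast
  have "strict_mono (h \<circ> h2)" using h(1) h2(1) by (rule strict_mono_o)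
  moreover have "incseq (\<lambda>j. Poly_Mapping.lookup (f ((h \<circ> h2) j)) i)" if "i < Suc m" for i
  proof (cases "i = m")
    case True then show ?thesis using h2(2) by (simp add: comp_def)
  next
    case False
    then have "i < m" using that by simp
    then have inc: "incseq (\<lambda>j. Poly_Mapping.lookup (f (h j)) i)" using h(2) by blast
    show ?thesis
    proof (rule monoI)
      fix a b :: nat assume "a \<le> b"
      then have "h2 a \<le> h2 b" using h2(1) strict_mono_less_eq by blast
      then show "Poly_Mapping.lookup (f ((h \<circ> h2) a)) i \<le> Poly_Mapping.lookup (f ((h \<circ> h2) b)) i"
        using monoD[OF inc] by simp
    qed
  qed
  ultimately show ?case by blast
qed

lemma dickson:
  fixes f :: "nat \<Rightarrow> (nat \<Rightarrow>\<^sub>0 nat)"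
  assumes "\<And>j. Poly_Mapping.keys (f j) \<subseteq> {..n}"
  shows "\<exists>i j. i < j \<and> pw (f i) (f j)"
proof -
  obtain h where h: "strict_mono h" "\<forall>i<Suc n. incseq (\<lambda>j. Poly_Mapping.lookup (f (h j)) i)"
    using dickson_aux by blast
  have "pw (f (h 0)) (f (h 1))"
    unfolding pw_def
  proof
    fix i
    show "Poly_Mapping.lookup (f (h 0)) i \<le> Poly_Mapping.lookup (f (h 1)) i"
    proof (cases "i \<le> n")
      case True
      then have "incseq (\<lambda>j. Poly_Mapping.lookup (f (h j)) i)" using h(2) by simp
      then show ?thesis by (rule monoD) simp
    next
      case False
      then have "i \<notin> Poly_Mapping.keys (f (h 0))" using assms by auto
      then show ?thesis by (simp add: in_keys_iff)
    qed
  qed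
  moreover have "h 0 < h 1" using h(1) by (simp add: strict_mono_def)
  ultimately show ?thesis by blast
qed

lemma chain_stab:
  fixes U :: "nat \<Rightarrow> (nat \<Rightarrow>\<^sub>0 nat) set"
  assumes mono: "\<And>i j. i \<le> j \<Longrightarrow> U i \<subseteq> U j"
    and bnd: "\<And>i a. a \<in> U i \<Longrightarrow> Poly_Mapping.keys a \<subseteq> {..n}"
    and up: "\<And>i a b. a \<in> U i \<Longrightarrow> pw a b \<Longrightarrow> Poly_Mapping.keys b \<subseteq> {..n} \<Longrightarrow> b \<in> U i"
  shows "\<exists>i0. \<forall>i\<ge>i0. U i = U i0"
proof (rule ccontr)
  assume "\<not> ?thesis"
  then have ex: "\<forall>i0. \<exists>i. i > i0 \<and> \<not> U i \<subseteq> U i0"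
    using mono by (metis dual_order.order_iff_strict subset_antisym)
  define nxt where "nxt i0 = (SOME i. i > i0 \<and> \<not> U i \<subseteq> U i0)" for i0
  have nxt: "nxt i0 > i0 \<and> \<not> U (nxt i0) \<subseteq> U i0" for i0
  proof -
    have "\<exists>i. i > i0 \<and> \<not> U i \<subseteq> U i0" using ex by blast
    then show ?thesis unfolding nxt_def by (rule someI_ex)
  qed
  define el where "el i0 = (SOME a. a \<in> U (nxt i0) \<and> a \<notin> U i0)" for i0
  have el: "el i0 \<in> U (nxt i0) \<and> el i0 \<notin> U i0" for i0
  proof -
    have "\<exists>a. a \<in> U (nxt i0) \<and> a \<notin> U i0" using nxt[of i0] by blast
    then show ?thesis unfolding el_def by (rule someI_ex)
  qed
  define s where "s k = (nxt ^^ k) 0" for k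
  have sSuc: "s (Suc k) = nxt (s k)" for k by (simp add: s_def)
  have smono: "strict_mono s"
    unfolding strict_mono_Suc_iff by (simp add: sSuc nxt)
  define f where "f k = el (s k)" for k
  have fb: "Poly_Mapping.keys (f j) \<subseteq> {..n}" for j
  proof -
    have "f j \<in> U (nxt (s j))" unfolding f_def using el by blast
    then show ?thesis by (rule bnd)
  qed
  obtain i j where ij: "i < j" "pw (f i) (f j)" using dickson[of f n, OF fb] by blast
  have "f i \<in> U (s (Suc i))" unfolding f_def sSuc using el by blast
  moreover have "s (Suc i) \<le> s j" using ij(1) strict_mono_less_eq[OF smono] by (simp add: Suc_leI)
  ultimately have "f i \<in> U (s j)" using mono by blast
  then have "f j \<in> U (s j)" using up[OF _ ij(2) fb] by blast
  then show False unfolding f_def using el by blast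
qed

lemma lookup_le_mdeg: "Poly_Mapping.lookup a i \<le> mdeg a"
proof (cases "i \<in> Poly_Mapping.keys a")
  case True then show ?thesis unfolding mdeg_def by (intro member_le_sum) auto
next
  case False then show ?thesis by (simp add: in_keys_iff)
qed

lemma finite_monoms: "finite {a::nat \<Rightarrow>\<^sub>0 nat. Poly_Mapping.keys a \<subseteq> {..n} \<and> mdeg a = k}"
  (is "finite ?M")
proof -
  define g :: "(nat \<Rightarrow>\<^sub>0 nat) \<Rightarrow> nat \<Rightarrow> nat" where "g a = restrict (Poly_Mapping.lookup a) {..n}" for a
  have inj: "inj_on g ?M"
  proof (rule inj_onI)
    fix a b assume a: "a \<in> ?M" and b: "b \<in> ?M" and eq: "g a = g b"
    show "a = b"
    proof (rule poly_mapping_eqI)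
      fix i
      show "Poly_Mapping.lookup a i = Poly_Mapping.lookup b i"
      proof (cases "i \<le> n")
        case True then show ?thesis using fun_cong[OF eq, of i] by (simp add: g_def)
      next
        case False
        then have "i \<notin> Poly_Mapping.keys a" "i \<notin> Poly_Mapping.keys b" using a b by auto
        then show ?thesis by (simp add: in_keys_iff)
      qed
    qed
  qed
  have "g ` ?M \<subseteq> PiE {..n} (\<lambda>_. {..k})"
    using lookup_le_mdeg by (auto simp: PiE_def extensional_def g_def)
  then have "finite (g ` ?M)" by (rule finite_subset) (intro finite_PiE, auto)
  then show ?thesis using finite_imageD[OF _ inj] by blast
qed

lemma lookup_scal: "Poly_Mapping.lookup (Poly_Mapping.single 0 c * (p::mpoly)) u = c * Poly_Mapping.lookup p u"
  using lookup_single_mult[of 0 c p u] by simp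

lemma homog_add: "homog k p \<Longrightarrow> homog k q \<Longrightarrow> homog k (p + q)"
  unfolding homog_def using keys_add[of p q] by blast

lemma homog_scal: "homog k p \<Longrightarrow> homog k (Poly_Mapping.single 0 c * p)"
  using homog_single_mult[of k p 0 c] by (simp add: mdeg_def)

lemma homog_zero [simp]: "homog k 0" unfolding homog_def by simp

lemma LM_sub:
  fixes V W :: "mpoly set"
  assumes VW: "V \<subseteq> W" and V0: "0 \<in> V"
    and Vcl: "\<And>p q c. p \<in> V \<Longrightarrow> q \<in> V \<Longrightarrow> p + Poly_Mapping.single 0 c * q \<in> V"
    and Wcl: "\<And>p q c. p \<in> W \<Longrightarrow> q \<in> W \<Longrightarrow> p + Poly_Mapping.single 0 c * q \<in> W"
    and Wh: "\<And>w. w \<in> W \<Longrightarrow> homog k w \<and> in_ring n w"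
    and LMc: "\<And>w. w \<in> W \<Longrightarrow> w \<noteq> 0 \<Longrightarrow> \<exists>v\<in>V. v \<noteq> 0 \<and> LM v = LM w"
  shows "W \<subseteq> V"
proof -
  let ?M = "{a::nat \<Rightarrow>\<^sub>0 nat. Poly_Mapping.keys a \<subseteq> {..n} \<and> mdeg a = k}"
  define \<mu> where "\<mu> w = card {a \<in> ?M. a \<le> LM w}" for w
  have "w \<in> W \<longrightarrow> w \<in> V" for w
  proof (induction w rule: measure_induct_rule[of \<mu>])
    case (less w)
    show ?case
    proof
      assume wW: "w \<in> W"
      show "w \<in> V"
      proof (cases "w = 0")
        case True then show ?thesis using V0 by simp
      next
        case False
        then obtain v where v: "v \<in> V" "v \<noteq> 0" "LM v = LM w" using LMc wW by blast
        have vW: "v \<in> W" using v VW by blast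
        have lv: "Poly_Mapping.lookup v (LM v) \<noteq> 0" using LM_in_keys[OF v(2)] by (simp add: in_keys_iff)
        have lw: "Poly_Mapping.lookup w (LM w) \<noteq> 0" using LM_in_keys[OF False] by (simp add: in_keys_iff)
        define c where "c = Poly_Mapping.lookup w (LM w) / Poly_Mapping.lookup v (LM v)"
        have cv: "c * Poly_Mapping.lookup v (LM v) = Poly_Mapping.lookup w (LM w)"
          unfolding c_def using lv by simp
        define w' where "w' = w + Poly_Mapping.single 0 (-c) * v"
        have w'W: "w' \<in> W" unfolding w'_def using Wcl wW vW by blast
        have lw': "Poly_Mapping.lookup w' u = Poly_Mapping.lookup w u - c * Poly_Mapping.lookup v u" for u
          unfolding w'_def by (simp add: lookup_add lookup_scal)
        have w'V: "w' \<in> V"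
        proof (cases "w' = 0")
          case True then show ?thesis using V0 by simp
        next
          case w'0: False
          have keys_le: "u \<le> LM w" if "u \<in> Poly_Mapping.keys w'" for u
          proof -
            have "u \<in> Poly_Mapping.keys w \<or> u \<in> Poly_Mapping.keys v"
              using that lw'[of u] by (auto simp: in_keys_iff)
            then show ?thesis using LM_max v(3) by metis
          qed
          have "LM w' \<le> LM w" using keys_le LM_in_keys[OF w'0] by blast
          moreover have "LM w' \<noteq> LM w"
          proof
            assume eq: "LM w' = LM w"
            have "Poly_Mapping.lookup w' (LM w) = 0" using lw'[of "LM w"] cv v(3) by simp
            then show False using LM_in_keys[OF w'0] eq by (simp add: in_keys_iff)
          qed
          ultimately have lt: "LM w' < LM w" by simp
          have "{a \<in> ?M. a \<le> LM w} \<subseteq> ?M" by blast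
          then have fin: "finite {a \<in> ?M. a \<le> LM w}" using finite_monoms[of n k] finite_subset by blast
          have LMwM: "LM w \<in> ?M"
          proof -
            have "LM w \<in> Poly_Mapping.keys w" using LM_in_keys[OF False] .
            then show ?thesis using Wh[OF wW] unfolding homog_def in_ring_def by auto
          qed
          have "{a \<in> ?M. a \<le> LM w'} \<subseteq> {a \<in> ?M. a \<le> LM w}"
            using lt by auto
          moreover have "LM w \<in> {a \<in> ?M. a \<le> LM w}" using LMwM by simp
          moreover have "LM w \<notin> {a \<in> ?M. a \<le> LM w'}" using lt by auto
          ultimately have "{a \<in> ?M. a \<le> LM w'} \<subset> {a \<in> ?M. a \<le> LM w}" by blast
          then have "\<mu> w' < \<mu> w" unfolding \<mu>_def using fin by (rule psubset_card_mono[rotated])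
          then show ?thesis using less w'W by blast
        qed
        have "w = w' + Poly_Mapping.single 0 c * v"
          by (rule poly_mapping_eqI) (simp add: lookup_add lookup_scal lw')
        then show ?thesis using Vcl[OF w'V v(1)] by simp
      qed
    qed
  qed
  then show ?thesis by blast
qed

lemma ideal_chain_stab:
  fixes C :: "nat \<Rightarrow> mpoly set"
  assumes idl: "\<And>i. is_ideal n (C i)" and mono: "\<And>i j. i \<le> j \<Longrightarrow> C i \<subseteq> C j"
  shows "\<exists>i0. \<forall>i\<ge>i0. \<forall>k. graded k (C i) = graded k (C i0)"
proof -
  define U where "U i = {LM p | p. p \<in> C i \<and> p \<noteq> 0 \<and> (\<exists>k. homog k p)}" for i
  have ring: "in_ring n p" if "p \<in> C i" for p i using idl[of i] that unfolding is_ideal_def by auto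
  have cmul: "q * p \<in> C i" if "p \<in> C i" "in_ring n q" for p q i
    using idl[of i] that unfolding is_ideal_def by auto
  have cadd: "p + q \<in> C i" if "p \<in> C i" "q \<in> C i" for p q i
    using idl[of i] that unfolding is_ideal_def by auto
  have c0: "0 \<in> C i" for i using idl[of i] unfolding is_ideal_def by auto
  have Umono: "U i \<subseteq> U j" if "i \<le> j" for i j unfolding U_def using mono[OF that] by blast
  have Ubnd: "Poly_Mapping.keys a \<subseteq> {..n}" if "a \<in> U i" for a i
  proof -
    obtain p where p: "a = LM p" "p \<in> C i" "p \<noteq> 0" using \<open>a \<in> U i\<close> unfolding U_def by blast
    then show ?thesis using ring[OF p(2)] LM_in_keys[OF p(3)] unfolding in_ring_def by auto
  qed
  have Uup: "b \<in> U i" if "a \<in> U i" "pw a b" "Poly_Mapping.keys b \<subseteq> {..n}" for a b i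
  proof -
    obtain p k where p: "a = LM p" "p \<in> C i" "p \<noteq> 0" "homog k p" using \<open>a \<in> U i\<close> unfolding U_def by blast
    define d where "d = b - a"
    have dab: "d + a = b" using \<open>pw a b\<close> unfolding d_def pw_def
      by (intro poly_mapping_eqI) (simp add: lookup_add lookup_minus)
    have "Poly_Mapping.keys d \<subseteq> Poly_Mapping.keys b"
      unfolding d_def by (auto simp: in_keys_iff lookup_minus)
    then have dr: "in_ring n (X d)" using that(3) by (intro in_ring_single) blast
    have in1: "X d * p \<in> C i" using cmul[OF p(2) dr] .
    have nz: "X d * p \<noteq> 0" and lm: "LM (X d * p) = d + LM p" using LM_single_mult[of 1 p d] p(3) by auto
    have "homog (mdeg d + k) (X d * p)" using homog_single_mult[OF p(4)] .
    then have hk: "\<exists>k. homog k (X d * p)" by blast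
    have eqb: "b = LM (X d * p)" using lm dab p(1) by simp
    show ?thesis unfolding U_def using eqb in1 nz hk by blast
  qed
  have "\<exists>i0. \<forall>i\<ge>i0. U i = U i0"
  proof (rule chain_stab[of U n])
    show "\<And>i j. i \<le> j \<Longrightarrow> U i \<subseteq> U j" by (rule Umono)
    show "\<And>i a. a \<in> U i \<Longrightarrow> Poly_Mapping.keys a \<subseteq> {..n}" by (rule Ubnd)
    show "\<And>i a b. a \<in> U i \<Longrightarrow> pw a b \<Longrightarrow> Poly_Mapping.keys b \<subseteq> {..n} \<Longrightarrow> b \<in> U i" by (rule Uup)
  qed
  then obtain i0 where i0: "\<forall>i\<ge>i0. U i = U i0" by blast
  have "graded k (C i) = graded k (C i0)" if "i \<ge> i0" for i k
  proof
    show "graded k (C i0) \<subseteq> graded k (C i)" unfolding graded_def using mono[OF that] by blast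
    show "graded k (C i) \<subseteq> graded k (C i0)"
    proof (rule LM_sub[where n = n and k = k])
      show "graded k (C i0) \<subseteq> graded k (C i)" unfolding graded_def using mono[OF that] by blast
      show "0 \<in> graded k (C i0)" unfolding graded_def using c0 by simp
      have cl: "p + Poly_Mapping.single 0 c * q \<in> graded k (C j)" if "p \<in> graded k (C j)" "q \<in> graded k (C j)" for p q c j
      proof -
        have "Poly_Mapping.single 0 c * q \<in> C j" using that(2) unfolding graded_def
          by (intro cmul in_ring_single) auto
        then have "p + Poly_Mapping.single 0 c * q \<in> C j" using that(1) cadd unfolding graded_def by blast
        moreover have "homog k (p + Poly_Mapping.single 0 c * q)" using that unfolding graded_def
          by (intro homog_add homog_scal) auto
        ultimately show ?thesis unfolding graded_def by blast
      qed
      show "\<And>p q c. p \<in> graded k (C i0) \<Longrightarrow> q \<in> graded k (C i0) \<Longrightarrow> p + Poly_Mapping.single 0 c * q \<in> graded k (C i0)"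
        by (rule cl)
      show "\<And>p q c. p \<in> graded k (C i) \<Longrightarrow> q \<in> graded k (C i) \<Longrightarrow> p + Poly_Mapping.single 0 c * q \<in> graded k (C i)"
        by (rule cl)
      show "\<And>w. w \<in> graded k (C i) \<Longrightarrow> homog k w \<and> in_ring n w"
        unfolding graded_def using ring by blast
      show "\<exists>v\<in>graded k (C i0). v \<noteq> 0 \<and> LM v = LM w" if "w \<in> graded k (C i)" "w \<noteq> 0" for w
      proof -
        have "LM w \<in> U i" using that unfolding U_def graded_def by blast
        then have "LM w \<in> U i0" using i0 \<open>i \<ge> i0\<close> by blast
        then obtain p k' where p: "LM w = LM p" "p \<in> C i0" "p \<noteq> 0" "homog k' p" unfolding U_def by blast
        have "mdeg (LM p) = k'" using p(3,4) LM_in_keys unfolding homog_def by blast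
        moreover have "mdeg (LM w) = k" using that LM_in_keys unfolding homog_def graded_def by blast
        ultimately have "k' = k" using p(1) by simp
        then show ?thesis using p unfolding graded_def by auto
      qed
    qed
  qed
  then show ?thesis by blast
qed

definition gen :: "nat \<Rightarrow> mpoly set \<Rightarrow> mpoly set" where
  "gen n G = \<Inter>{Q. is_ideal n Q \<and> G \<subseteq> Q}"

lemma ring_ideal: "is_ideal n {p. in_ring n p}"
  unfolding is_ideal_def by (auto intro: in_ring_add in_ring_mult)

lemma is_idealI:
  assumes "S \<subseteq> {p. in_ring n p}" "0 \<in> S" "\<forall>p\<in>S. \<forall>q\<in>S. p + q \<in> S" "\<forall>p\<in>S. \<forall>q. in_ring n q \<longrightarrow> q * p \<in> S"
  shows "is_ideal n S"
  using assms unfolding is_ideal_def by blast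

lemma gen_ideal:
  assumes "G \<subseteq> {p. in_ring n p}"
  shows "is_ideal n (gen n G)"
proof -
  have fam: "{p. in_ring n p} \<in> {Q. is_ideal n Q \<and> G \<subseteq> Q}" using ring_ideal assms by blast
  let ?S = "\<Inter>{Q. is_ideal n Q \<and> G \<subseteq> Q}"
  have 1: "?S \<subseteq> {p. in_ring n p}" using fam by blast
  have 2: "0 \<in> ?S" unfolding is_ideal_def by blast
  have 3: "\<forall>p\<in>?S. \<forall>q\<in>?S. p + q \<in> ?S" unfolding is_ideal_def by blast
  have 4: "\<forall>p\<in>?S. \<forall>q. in_ring n q \<longrightarrow> q * p \<in> ?S" unfolding is_ideal_def by blast
  show ?thesis unfolding gen_def by (rule is_idealI[OF 1 2 3 4])
qed

lemma gen_sub: "G \<subseteq> gen n G" unfolding gen_def by blast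

lemma gen_min: "is_ideal n Q \<Longrightarrow> G \<subseteq> Q \<Longrightarrow> gen n G \<subseteq> Q" unfolding gen_def by blast

lemma gen_mono: "G \<subseteq> H \<Longrightarrow> gen n G \<subseteq> gen n H" unfolding gen_def by blast

context
  fixes n :: nat and I :: "mpoly set"
  assumes hI: "homogeneous_ideal n I"
begin

lemma sat_eventually_eq: "\<exists>E. \<forall>k\<ge>E. graded k (saturation n I) = graded k I"
proof -
  let ?J = "saturation n I"
  have hJ: "homogeneous_ideal n ?J" by (rule sat_ideal[OF hI])
  have Jring: "in_ring n p" if "p \<in> ?J" for p using that unfolding saturation_def by auto
  \<comment> \<open>Step 1: uniform saturation exponent on homogeneous elements\<close>
  have "\<exists>i0. \<forall>i\<ge>i0. \<forall>k. graded k (Kq n I i) = graded k (Kq n I i0)"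
    by (rule ideal_chain_stab[of n]) (auto intro: Kq_ideal[OF hI] dest: Kq_mono[OF hI])
  then obtain N0 where N0: "\<forall>i\<ge>N0. \<forall>k. graded k (Kq n I i) = graded k (Kq n I N0)" by blast
  have h1: "\<theta> \<in> Kq n I N0" if th: "\<theta> \<in> graded j ?J" for \<theta> j
  proof -
    obtain N where "\<theta> \<in> Kq n I N" using th unfolding graded_def saturation_Kq by blast
    then have "\<theta> \<in> Kq n I (max N N0)" using Kq_mono[OF hI, of N "max N N0"] by auto
    then have "\<theta> \<in> graded j (Kq n I (max N N0))" using th unfolding graded_def by auto
    moreover have "graded j (Kq n I (max N N0)) = graded j (Kq n I N0)"
      using N0 max.cobounded2 by blast
    ultimately have "\<theta> \<in> graded j (Kq n I N0)" by simp
    then show ?thesis unfolding graded_def by auto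
  qed
  \<comment> \<open>Step 2: the saturation is generated in bounded degree\<close>
  define G where "G D = {p. \<exists>j\<le>D. p \<in> graded j ?J}" for D
  have Gring: "G D \<subseteq> {p. in_ring n p}" for D unfolding G_def graded_def using Jring by auto
  have "\<exists>i0. \<forall>i\<ge>i0. \<forall>k. graded k (gen n (G i)) = graded k (gen n (G i0))"
  proof (rule ideal_chain_stab[of n])
    show "is_ideal n (gen n (G i))" for i by (rule gen_ideal[OF Gring])
    show "gen n (G i) \<subseteq> gen n (G j)" if "i \<le> j" for i j
    proof -
      have "G i \<subseteq> G j" unfolding G_def using that order_trans by blast
      then show ?thesis by (rule gen_mono)
    qed
  qed
  then obtain D0 where D0: "\<forall>i\<ge>D0. \<forall>k. graded k (gen n (G i)) = graded k (gen n (G D0))" by blast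
  have h2: "\<theta> \<in> gen n (G D0)" if "\<theta> \<in> graded k ?J" for \<theta> k
  proof (cases "k \<le> D0")
    case True
    then have "\<theta> \<in> G D0" using that unfolding G_def by blast
    then show ?thesis using gen_sub by blast
  next
    case False
    then have "\<theta> \<in> G k" using that unfolding G_def by blast
    then have "\<theta> \<in> gen n (G k)" using gen_sub by blast
    then have "\<theta> \<in> graded k (gen n (G k))" using that unfolding graded_def by auto
    moreover have "graded k (gen n (G k)) = graded k (gen n (G D0))"
    proof -
      have "k \<ge> D0" using False by simp
      then show ?thesis using D0 by blast
    qed
    ultimately have "\<theta> \<in> graded k (gen n (G D0))" by simp
    then show ?thesis unfolding graded_def by auto
  qed
  define E where "E = D0 + N0"
  define Q where "Q = {\<theta>. in_ring n \<theta> \<and> (\<forall>i b. Poly_Mapping.keys b \<subseteq> {..n} \<and> mdeg b + i \<ge> E \<longrightarrow> X b * hcomp i \<theta> \<in> I)}"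
  have Qideal: "is_ideal n Q"
  proof (rule ideal_criterion)
    show "Q \<subseteq> {p. in_ring n p}" unfolding Q_def by auto
    show "0 \<in> Q" unfolding Q_def by (simp add: I_zero[OF hI])
    show "p + q \<in> Q" if "p \<in> Q" "q \<in> Q" for p q
    proof -
      have "X b * hcomp i (p + q) \<in> I" if "Poly_Mapping.keys b \<subseteq> {..n}" "mdeg b + i \<ge> E" for i b
      proof -
        have "X b * hcomp i p \<in> I" "X b * hcomp i q \<in> I" using \<open>p \<in> Q\<close> \<open>q \<in> Q\<close> that unfolding Q_def by blast+
        then have "X b * hcomp i p + X b * hcomp i q \<in> I" by (rule I_add[OF hI])
        then show ?thesis by (simp add: hcomp_add distrib_left)
      qed
      moreover have "in_ring n (p + q)" using that unfolding Q_def by (auto intro: in_ring_add)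
      ultimately show ?thesis unfolding Q_def by blast
    qed
    show "Poly_Mapping.single m c * p \<in> Q" if "p \<in> Q" "Poly_Mapping.keys m \<subseteq> {..n}" for p m c
    proof -
      have "X b * hcomp i (Poly_Mapping.single m c * p) \<in> I"
        if b: "Poly_Mapping.keys b \<subseteq> {..n}" "mdeg b + i \<ge> E" for i b
      proof (cases "mdeg m \<le> i")
        case True
        have bm: "Poly_Mapping.keys (b + m) \<subseteq> {..n}" using b(1) \<open>Poly_Mapping.keys m \<subseteq> {..n}\<close>
          by (simp add: keys_monom_add)
        have "mdeg (b + m) + (i - mdeg m) \<ge> E" using b(2) True by (simp add: mdeg_add)
        then have "X (b + m) * hcomp (i - mdeg m) p \<in> I" using \<open>p \<in> Q\<close> bm unfolding Q_def by blast
        then have "Poly_Mapping.single 0 c * (X (b + m) * hcomp (i - mdeg m) p) \<in> I"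
        proof -
          have r0: "in_ring n (Poly_Mapping.single 0 c)" by (rule in_ring_single) simp
          show ?thesis by (rule I_mult[OF hI \<open>X (b + m) * hcomp (i - mdeg m) p \<in> I\<close> r0])
        qed
        moreover have "X b * hcomp i (Poly_Mapping.single m c * p) = Poly_Mapping.single 0 c * (X (b + m) * hcomp (i - mdeg m) p)"
        proof -
          have e1: "hcomp i (Poly_Mapping.single m c * p) = Poly_Mapping.single m c * hcomp (i - mdeg m) p"
            using True by (simp add: hcomp_single_mult)
          have e2: "X b * Poly_Mapping.single m c = Poly_Mapping.single 0 c * X (b + m)"
            by (simp add: mult_single)
          show ?thesis by (simp only: e1 mult.assoc[symmetric] e2)
        qed
        ultimately show ?thesis by simp
      next
        case False
        have z: "hcomp i (Poly_Mapping.single m c * p) = 0"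
          by (subst hcomp_single_mult) (use False in simp)
        show ?thesis unfolding z using I_zero[OF hI] by simp
      qed
      moreover have "in_ring n (Poly_Mapping.single m c * p)"
        using that unfolding Q_def by (auto intro: in_ring_mult in_ring_single)
      ultimately show ?thesis unfolding Q_def by blast
    qed
  qed
  have GQ: "G D0 \<subseteq> Q"
  proof
    fix g assume "g \<in> G D0"
    then obtain j where j: "j \<le> D0" "g \<in> graded j ?J" unfolding G_def by blast
    have gK: "g \<in> Kq n I N0" using h1[OF j(2)] .
    have hg: "homog j g" using j(2) unfolding graded_def by auto
    have "X b * hcomp i g \<in> I" if "Poly_Mapping.keys b \<subseteq> {..n}" "mdeg b + i \<ge> E" for i b
    proof (cases "i = j")
      case True
      then have "mdeg b \<ge> N0" using that j(1) unfolding E_def by linarith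
      then have "X b * g \<in> I" using Kq_ge[OF hI gK that(1)] by blast
      then show ?thesis using hcomp_homog[OF hg] True by simp
    next
      case False
      have "hcomp i g = 0" using hcomp_homog[OF hg, of i] False by (simp split: if_splits)
      then show ?thesis using I_zero[OF hI] by (simp only: mult_zero_right)
    qed
    moreover have "in_ring n g" using j(2) Jring unfolding graded_def by auto
    ultimately show "g \<in> Q" unfolding Q_def by blast
  qed
  have CQ: "gen n (G D0) \<subseteq> Q" by (rule gen_min[OF Qideal GQ])
  have "graded k ?J = graded k I" if "k \<ge> E" for k
  proof
    show "graded k I \<subseteq> graded k ?J" using I_sub_sat[OF hI] unfolding graded_def by auto
    show "graded k ?J \<subseteq> graded k I"
    proof
      fix \<theta> assume th: "\<theta> \<in> graded k ?J"
      then have "\<theta> \<in> Q" using h2 CQ by blast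
      then have all: "\<forall>i b. Poly_Mapping.keys b \<subseteq> {..n} \<and> mdeg b + i \<ge> E \<longrightarrow> X b * hcomp i \<theta> \<in> I"
        unfolding Q_def by blast
      have "X 0 * hcomp k \<theta> \<in> I" using all[rule_format, of 0 k] that by simp
      moreover have "hcomp k \<theta> = \<theta>" using th hcomp_homog unfolding graded_def by auto
      ultimately have "\<theta> \<in> I" by simp
      then show "\<theta> \<in> graded k I" using th unfolding graded_def by auto
    qed
  qed
  then show ?thesis by blast
qed

end

theorem corollary3p3:
  fixes n d r :: nat and F :: mpoly and I :: "mpoly set"
  assumes "in_ring n F" and "homog d F"
    and "homogeneous_ideal n I"
    and "I \<subseteq> Ann n F"
    and "r > 0"
    and "const_hilbert_poly n I r"
    and "graded d I = graded d (saturation n I)"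
  shows "cactus_rank n d F \<le> r"
proof -
  let ?J = "saturation n I"
  obtain E where E: "\<forall>k\<ge>E. graded k ?J = graded k I" using sat_eventually_eq[OF assms(3)] by blast
  obtain k0 where k0: "\<forall>k\<ge>k0. hilbert_fun n I k = r" using assms(6) unfolding const_hilbert_poly_def by blast
  have "const_hilbert_poly n ?J r"
    unfolding const_hilbert_poly_def
  proof (intro exI[of _ "max E k0"] allI impI)
    fix k assume "k \<ge> max E k0"
    then have k1: "k \<ge> E" "k \<ge> k0" by auto
    have "graded k ?J = graded k I" using E k1(1) by blast
    then have "hilbert_fun n ?J k = hilbert_fun n I k" unfolding hilbert_fun_def by simp
    also have "\<dots> = r" using k0 k1(2) by blast
    finally show "hilbert_fun n ?J k = r" .
  qed
  then have Z: "zero_dim_scheme_ideal n ?J r"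
    unfolding zero_dim_scheme_ideal_def using sat_ideal[OF assms(3)] sat_sat[OF assms(3)] by blast
  have S: "in_span_veronese n d ?J F"
    unfolding in_span_veronese_def
  proof
    fix \<theta> assume "\<theta> \<in> graded d ?J"
    then have "\<theta> \<in> I" using assms(7) unfolding graded_def by blast
    then show "contract \<theta> F = 0" using assms(4) unfolding Ann_def by blast
  qed
  have "\<exists>J. zero_dim_scheme_ideal n J r \<and> in_span_veronese n d J F" using Z S by blast
  then show ?thesis unfolding cactus_rank_def by (rule Least_le)
qed

end
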